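(* Consider the waning-immunity model described in the context, with $\beta_0>0$. Let $C>0$ be a constant as follows: for all sufficiently small $\delta\ge0$, every endemic equilibrium with $I^*\in[0,1]$ has $I^*\in J_1\cup J_2$, where $J_i=[y_i-C\sqrt\delta,\,y_i+C\sqrt\delta]$ and $y_1\le y_2$ are the real roots of $$1+\frac{r}{\beta_0x+\mu}-\frac{\beta_n}{\beta_nx+\mu+\omega_n}-\frac{\omega_n\beta_0}{(\beta_0x+\mu)(\beta_nx+\mu+\omega_n)}=0.$$ Suppose $J_i\subset(0,1]$ for some $i\in\{1,2\}$. Then for $\delta$ sufficiently small, provided $|y_1-y_2|\ge\delta^{1/3}$, there exists a unique endemic equilibrium of the system with $I^*\in J_i$.
   Context: Model: Fix an integer $n\ge 1$ and parameters $\delta\ge 0$ (rate of waning immunity), $\omega\ge 0$ (vaccination rate), $r>0$ (recovery rate), $\mu>0$ (birth = death rate), coverages $p_0=0$, $p_1,\dots,p_n\in[0,1]$, and transmission rates $0\le\beta_0\le\beta_1\le\dots\le\beta_n$ with $\beta_0<\beta_n$. Write $\omega_i=p_i\omega$, $\delta_i=(1-p_i)\delta$ (so $\delta_0=\delta$). The ODE system for $(S_0,\dots,S_n,I)$ is $$S_0'=\sum_{i=1}^n\omega_iS_i-\delta S_0+rI-\beta_0IS_0-\mu S_0,$$ $$S_i'=-\omega_iS_i+\delta_{i-1}S_{i-1}-\delta_iS_i-\beta_iIS_i-\mu S_i\quad(1\le i\le n-1),$$ $$S_n'=\mu-\omega_nS_n+\delta_{n-1}S_{n-1}-\beta_nIS_n-\mu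 S_n,$$ $$I'=I\sum_{i=0}^n\beta_iS_i-rI-\mu I,$$ with the normalization $\sum_iS_i+I=1$. An endemic equilibrium is an equilibrium $(S_0^*,\dots,S_n^*,I^* )$ of this system satisfying the normalization with $I^*\neq0$. *)

theory Defs
  imports Complex_Main
begin

text \<open>Compartments S_0..S_n are
  given by a function S :: nat => real (only indices 0..n matter).
  omega_i = p i * omega, delta_i = (1 - p i) * delta, with p 0 = 0 assumed separately.\<close>

definition endemic_equilibrium ::
  "nat \<Rightarrow> real \<Rightarrow> real \<Rightarrow> real \<Rightarrow> real \<Rightarrow> (nat \<Rightarrow> real) \<Rightarrow> (nat \<Rightarrow> real)
   \<Rightarrow> (nat \<Rightarrow> real) \<Rightarrow> real \<Rightarrow> bool" where
  "endemic_equilibrium n \<delta> \<omega> r \<mu> p \<beta> S I \<longleftrightarrow>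
     (\<Sum>i\<le>n. S i) + I = 1 \<and> I \<noteq> 0 \<and>
     (\<Sum>i\<in>{1..n}. p i * \<omega> * S i) - \<delta> * S 0 + r * I - \<beta> 0 * I * S 0 - \<mu> * S 0 = 0 \<and>
     (\<forall>i\<in>{1..n-1}. - (p i * \<omega>) * S i + (1 - p (i-1)) * \<delta> * S (i-1)
          - (1 - p i) * \<delta> * S i - \<beta> i * I * S i - \<mu> * S i = 0) \<and>
     \<mu> - p n * \<omega> * S n + (1 - p (n-1)) * \<delta> * S (n-1) - \<beta> n * I * S n - \<mu> * S n = 0 \<and>
     I * (\<Sum>i\<le>n. \<beta> i * S i) - r * I - \<mu> * I = 0"

definition root_fun :: "real \<Rightarrow> real \<Rightarrow> real \<Rightarrow> real \<Rightarrow> real \<Rightarrow> real \<Rightarrow> real" where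
  "root_fun r \<mu> \<beta>0 \<beta>n \<omega>n x =
     1 + r / (\<beta>0 * x + \<mu>) - \<beta>n / (\<beta>n * x + \<mu> + \<omega>n)
       - \<omega>n * \<beta>0 / ((\<beta>0 * x + \<mu>) * (\<beta>n * x + \<mu> + \<omega>n))"

end

theory Submission
  imports Defs "HOL-Analysis.Analysis"
begin


lemma cont_pair_eps:
  fixes G :: "real \<Rightarrow> real \<Rightarrow> real"
  assumes "isCont (\<lambda>z. G (fst z) (snd z)) (y, 0)" "e > 0"
  shows "\<exists>s>0. \<forall>x d. \<bar>x - y\<bar> < s \<and> \<bar>d\<bar> < s \<longrightarrow> \<bar>G x d - G y 0\<bar> < e"
proof -
  from assms(1) have "(\<lambda>z. G (fst z) (snd z)) \<midarrow>(y,0)\<rightarrow> G y 0" by (simp add: isCont_def)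
  from LIM_D[OF this assms(2)] obtain s where s: "s > 0"
    and H: "\<forall>z. z \<noteq> (y,0) \<and> norm (z - (y,0)) < s \<longrightarrow> norm (G (fst z) (snd z) - G y 0) < e" by auto
  show ?thesis
  proof (intro exI[of _ "s/2"] conjI allI impI)
    show "s/2 > 0" using s by simp
    fix x d :: real assume a: "\<bar>x - y\<bar> < s/2 \<and> \<bar>d\<bar> < s/2"
    show "\<bar>G x d - G y 0\<bar> < e"
    proof (cases "(x,d) = (y,0)")
      case True then show ?thesis using assms(2) by auto
    next
      case False
      have "norm ((x,d) - (y,0)) = sqrt ((x-y)^2 + d^2)" by (simp add: norm_Pair)
      also have "\<dots> \<le> \<bar>x - y\<bar> + \<bar>d\<bar>" by (rule real_sqrt_le_iff[THEN iffD2, of _ "(\<bar>x - y\<bar> + \<bar>d\<bar>)^2", simplified]) (auto simp: power2_eq_square algebra_simps abs_mult_self_eq)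
      finally have "norm ((x,d) - (y,0)) < s" using a by linarith
      then show ?thesis using H False by auto
    qed
  qed
qed

lemma local_unique_zero_pos:
  fixes F G :: "real \<Rightarrow> real \<Rightarrow> real" and y K \<eta> C :: real
  assumes eta: "\<eta> > 0"
    and der: "\<And>x d. \<bar>x - y\<bar> < \<eta> \<Longrightarrow> 0 \<le> d \<Longrightarrow> d < \<eta> \<Longrightarrow> ((\<lambda>x. F x d) has_real_derivative G x d) (at x)"
    and cont: "isCont (\<lambda>z. G (fst z) (snd z)) (y, 0)"
    and G0: "G y 0 > 0"
    and bnd: "\<And>d. 0 \<le> d \<Longrightarrow> d < \<eta> \<Longrightarrow> \<bar>F y d\<bar> \<le> K * d"
    and C: "C > 0"
  shows "\<exists>\<delta>1>0. \<forall>d. 0 < d \<and> d < \<delta>1 \<longrightarrow> (\<exists>x. \<bar>x - y\<bar> \<le> C * sqrt d \<and> F x d = 0 \<and>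
           (\<forall>x'. \<bar>x' - y\<bar> \<le> C * sqrt d \<and> F x' d = 0 \<longrightarrow> x' = x))"
proof -
  define g where "g = G y 0 / 2"
  have g: "g > 0" using G0 by (simp add: g_def)
  obtain s where s: "s > 0" and sH: "\<And>x d. \<bar>x - y\<bar> < s \<Longrightarrow> \<bar>d\<bar> < s \<Longrightarrow> \<bar>G x d - G y 0\<bar> < g"
    using cont_pair_eps[OF cont g] by blast
  define \<rho> where "\<rho> = min \<eta> s"
  have \<rho>: "\<rho> > 0" "\<rho> \<le> \<eta>" "\<rho> \<le> s" using eta s by (auto simp: \<rho>_def)
  define K' where "K' = \<bar>K\<bar> + 1"
  have K': "K' > 0" "K \<le> K'" by (auto simp: K'_def)
  define \<delta>1 where "\<delta>1 = min \<rho> (min ((\<rho>/C)^2) ((g*C/K')^2))"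
  have \<delta>1: "\<delta>1 > 0" using \<rho> C g K' by (auto simp: \<delta>1_def)
  show ?thesis
  proof (rule exI[of _ \<delta>1], intro conjI allI impI)
    show "\<delta>1 > 0" by fact
    fix d assume d: "0 < d \<and> d < \<delta>1"
    define h where "h = C * sqrt d"
    have sd: "sqrt d < \<rho>/C"
      using d \<rho> C g K' by (auto simp: \<delta>1_def intro!: real_less_lsqrt)
    have h: "h < \<rho>" "h > 0" using sd C d by (auto simp: h_def field_simps)
    have sd2: "sqrt d < g*C/K'"
      using d \<rho> C g K' by (auto simp: \<delta>1_def intro!: real_less_lsqrt)
    have Kd: "K' * d < g * h"
    proof -
      have "K' * d = K' * sqrt d * sqrt d" using d by simp
      also have "\<dots> < K' * (g*C/K') * sqrt d"
        using sd2 K' d by (intro mult_strict_right_mono mult_strict_left_mono) auto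
      also have "\<dots> = g * h" using K' by (simp add: h_def)
      finally show ?thesis .
    qed
    have dle: "d < \<eta>" "d < s" using d \<rho> by (auto simp: \<delta>1_def)
    have Gpos: "G x d > g" if "\<bar>x - y\<bar> \<le> h" for x
    proof -
      have "\<bar>G x d - G y 0\<bar> < g" using sH[of x d] that h \<rho> dle d by auto
      then show ?thesis unfolding g_def by linarith
    qed
    have D: "((\<lambda>x. F x d) has_real_derivative G x d) (at x)" if "\<bar>x - y\<bar> \<le> h" for x
      using der[of x d] that h \<rho> dle d by auto
    have mono: "F a d < F b d" if "a < b" "\<bar>a - y\<bar> \<le> h" "\<bar>b - y\<bar> \<le> h" for a b
      using that by (intro DERIV_pos_imp_increasing[of a b "\<lambda>x. F x d"]) (auto intro!: exI[of _ "G _ d"] D Gpos[THEN less_trans[OF g]])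
    have mono2: "F a d - g * a < F b d - g * b" if "a < b" "\<bar>a - y\<bar> \<le> h" "\<bar>b - y\<bar> \<le> h" for a b
      using that by (intro DERIV_pos_imp_increasing[of a b "\<lambda>x. F x d - g * x"])
        (auto intro!: exI[of _ "G _ d - g"] derivative_eq_intros D Gpos)
    have Fy: "\<bar>F y d\<bar> \<le> K' * d" using bnd[of d] d dle K' by (smt (verit) mult_right_mono)
    have up: "F (y + h) d > 0" using mono2[of y "y+h"] h Fy Kd by (simp add: ring_distribs abs_le_iff)
    have lo: "F (y - h) d < 0" using mono2[of "y - h" y] h Fy Kd by (simp add: ring_distribs abs_le_iff)
    have "continuous_on {y-h..y+h} (\<lambda>x. F x d)"
      by (rule continuous_at_imp_continuous_on) (auto intro!: DERIV_isCont[OF D] simp: abs_le_iff)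
    then obtain x where x: "y - h \<le> x" "x \<le> y + h" "F x d = 0"
      using IVT'[of "\<lambda>x. F x d" "y-h" 0 "y+h"] up lo h by auto
    show "\<exists>x. \<bar>x - y\<bar> \<le> C * sqrt d \<and> F x d = 0 \<and>
           (\<forall>x'. \<bar>x' - y\<bar> \<le> C * sqrt d \<and> F x' d = 0 \<longrightarrow> x' = x)"
    proof (intro exI[of _ x] conjI allI impI)
      show "\<bar>x - y\<bar> \<le> C * sqrt d" using x by (auto simp: h_def)
      show "F x d = 0" by fact
      fix x' assume a: "\<bar>x' - y\<bar> \<le> C * sqrt d \<and> F x' d = 0"
      show "x' = x"
      proof (rule ccontr)
        assume "x' \<noteq> x"
        have c: "x' < x \<or> x < x'" using \<open>x' \<noteq> x\<close> by linarith
        have xh: "\<bar>x - y\<bar> \<le> h" using x by (simp add: abs_le_iff)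
        have xh': "\<bar>x' - y\<bar> \<le> h" using a by (simp add: h_def)
        then show False using c mono[of x' x] mono[of x x'] a x xh xh' by auto
      qed
    qed
  qed
qed



context
  fixes n :: nat and \<omega> r \<mu> :: real and p \<beta> :: "nat \<Rightarrow> real"
begin

definition den :: "nat \<Rightarrow> real \<Rightarrow> real \<Rightarrow> real" where
  "den k x d = p k * \<omega> + (1 - p k) * d + \<beta> k * x + \<mu>"

primrec ee :: "nat \<Rightarrow> real \<Rightarrow> real \<Rightarrow> real" where
  "ee 0 x d = 1"
| "ee (Suc i) x d = ee i x d * ((1 - p i) * d / den (Suc i) x d)"

primrec ee' :: "nat \<Rightarrow> real \<Rightarrow> real \<Rightarrow> real" where
  "ee' 0 x d = 0"
| "ee' (Suc i) x d = ee' i x d * ((1 - p i) * d / den (Suc i) x d)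
     + ee i x d * (- ((1 - p i) * d * \<beta> (Suc i)) / (den (Suc i) x d)^2)"

definition dn :: "real \<Rightarrow> real" where "dn x = p n * \<omega> + \<beta> n * x + \<mu>"

definition Eh :: "real \<Rightarrow> real \<Rightarrow> real" where
  "Eh x d = dn x * (\<Sum>i<n. ee i x d) + (1 - p (n-1)) * d * ee (n-1) x d"
definition Bh :: "real \<Rightarrow> real \<Rightarrow> real" where
  "Bh x d = dn x * (\<Sum>i<n. \<beta> i * ee i x d) + \<beta> n * ((1 - p (n-1)) * d * ee (n-1) x d)"
definition H :: "real \<Rightarrow> real \<Rightarrow> real" where
  "H x d = Bh x d * (dn x * (1 - x) - \<mu>) + (\<beta> n * \<mu> - (r + \<mu>) * dn x) * Eh x d"
definition Eh' :: "real \<Rightarrow> real \<Rightarrow> real" where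
  "Eh' x d = \<beta> n * (\<Sum>i<n. ee i x d) + dn x * (\<Sum>i<n. ee' i x d) + (1 - p (n-1)) * d * ee' (n-1) x d"
definition Bh' :: "real \<Rightarrow> real \<Rightarrow> real" where
  "Bh' x d = \<beta> n * (\<Sum>i<n. \<beta> i * ee i x d) + dn x * (\<Sum>i<n. \<beta> i * ee' i x d)
     + \<beta> n * ((1 - p (n-1)) * d * ee' (n-1) x d)"
definition G :: "real \<Rightarrow> real \<Rightarrow> real" where
  "G x d = Bh' x d * (dn x * (1 - x) - \<mu>) + Bh x d * (\<beta> n * (1 - x) - dn x)
     - (r + \<mu>) * \<beta> n * Eh x d + (\<beta> n * \<mu> - (r + \<mu>) * dn x) * Eh' x d"
definition s0 :: "real \<Rightarrow> real \<Rightarrow> real" where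
  "s0 x d = (dn x * (1 - x) - \<mu>) / Eh x d"
definition Sf :: "real \<Rightarrow> real \<Rightarrow> nat \<Rightarrow> real" where
  "Sf x d i = (if i < n then ee i x d * s0 x d
      else (\<mu> + (1 - p (n-1)) * d * ee (n-1) x d * s0 x d) / dn x)"

context
  assumes n: "n \<ge> 1" and \<omega>: "\<omega> \<ge> 0" and \<mu>: "\<mu> > 0"
    and p0: "p 0 = 0" and p: "\<forall>i\<in>{1..n}. 0 \<le> p i \<and> p i \<le> 1"
    and \<beta>pos: "\<beta> 0 > 0"
    and \<beta>mono: "\<forall>i j. i \<le> j \<and> j \<le> n \<longrightarrow> \<beta> i \<le> \<beta> j"
begin

lemma p_le: "i \<le> n \<Longrightarrow> 0 \<le> p i \<and> p i \<le> 1"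
  using p p0 by (cases "i = 0") auto

lemma beta_pos: "i \<le> n \<Longrightarrow> \<beta> i > 0"
  using \<beta>mono \<beta>pos by (metis le0 less_le_trans)

lemma den_pos: "k \<le> n \<Longrightarrow> x \<ge> 0 \<Longrightarrow> d \<ge> 0 \<Longrightarrow> den k x d > 0"
proof -
  assume a: "k \<le> n" "x \<ge> 0" "d \<ge> 0"
  have "p k * \<omega> \<ge> 0" "(1 - p k) * d \<ge> 0" "\<beta> k * x \<ge> 0"
    using p_le[OF a(1)] beta_pos[OF a(1)] a \<omega> by auto
  then show ?thesis using \<mu> by (simp add: den_def)
qed

lemma dn_pos: "x \<ge> 0 \<Longrightarrow> dn x > 0"
proof -
  assume a: "x \<ge> 0"
  have "p n * \<omega> \<ge> 0" "\<beta> n * x \<ge> 0"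
    using p_le[of n] beta_pos[of n] a \<omega> by auto
  then show ?thesis using \<mu> by (simp add: dn_def)
qed

lemma ee_nonneg: "i < n \<Longrightarrow> x \<ge> 0 \<Longrightarrow> d \<ge> 0 \<Longrightarrow> ee i x d \<ge> 0"
proof (induction i)
  case 0 then show ?case by simp
next
  case (Suc i)
  have "den (Suc i) x d > 0" using den_pos Suc by simp
  moreover have "1 - p i \<ge> 0" using p_le[of i] Suc by simp
  ultimately show ?case using Suc by simp
qed

lemma Eh_pos: "x \<ge> 0 \<Longrightarrow> d \<ge> 0 \<Longrightarrow> Eh x d > 0"
proof -
  assume a: "x \<ge> 0" "d \<ge> 0"
  have "(\<Sum>i<n. ee i x d) \<ge> ee 0 x d"
    using n by (intro member_le_sum) (auto intro: ee_nonneg a)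
  then have s: "(\<Sum>i<n. ee i x d) \<ge> 1" by simp
  have "(1 - p (n-1)) * d * ee (n-1) x d \<ge> 0"
    using p_le[of "n-1"] ee_nonneg[of "n-1" x d] a n by auto
  moreover have "dn x * (\<Sum>i<n. ee i x d) > 0" using dn_pos[OF a(1)] s by simp
  ultimately show ?thesis by (simp add: Eh_def)
qed

lemma ee_deriv: "i < n \<Longrightarrow> x \<ge> 0 \<Longrightarrow> d \<ge> 0 \<Longrightarrow>
   ((\<lambda>x. ee i x d) has_real_derivative ee' i x d) (at x)"
proof (induction i)
  case 0 then show ?case by simp
next
  case (Suc i)
  have dp: "den (Suc i) x d \<noteq> 0" using den_pos[of "Suc i" x d] Suc by force
  have IH: "((\<lambda>x. ee i x d) has_real_derivative ee' i x d) (at x)" using Suc by simp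
  have dd: "((\<lambda>x. den (Suc i) x d) has_real_derivative \<beta> (Suc i)) (at x)"
    unfolding den_def by (auto intro!: derivative_eq_intros)
  show ?case
    unfolding ee.simps ee'.simps
    using dp by (auto intro!: derivative_eq_intros IH dd simp: power2_eq_square field_simps)
qed

lemma H_deriv: "x \<ge> 0 \<Longrightarrow> d \<ge> 0 \<Longrightarrow> ((\<lambda>x. H x d) has_real_derivative G x d) (at x)"
proof -
  assume a: "x \<ge> 0" "d \<ge> 0"
  have E: "((\<lambda>x. ee i x d) has_real_derivative ee' i x d) (at x)" if "i \<in> {..<n}" for i
    using ee_deriv[of i x d] that a by auto
  have E1: "((\<lambda>x. ee (n-1) x d) has_real_derivative ee' (n-1) x d) (at x)"
    using ee_deriv[of "n-1" x d] a n by auto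
  have D: "((\<lambda>x. dn x) has_real_derivative \<beta> n) (at x)"
    unfolding dn_def by (auto intro!: derivative_eq_intros)
  have Ed: "((\<lambda>x. Eh x d) has_real_derivative Eh' x d) (at x)"
    unfolding Eh_def Eh'_def using n
    by (auto intro!: derivative_eq_intros D E E1 simp: algebra_simps)
  have Bd: "((\<lambda>x. Bh x d) has_real_derivative Bh' x d) (at x)"
    unfolding Bh_def Bh'_def using n
    by (auto intro!: derivative_eq_intros D E E1 simp: algebra_simps sum_distrib_left sum.distrib)
  show ?thesis
    unfolding H_def G_def
    by (auto intro!: derivative_eq_intros D Ed Bd simp: algebra_simps)
qed


lemma ee_cont: "i < n \<Longrightarrow> x0 \<ge> 0 \<Longrightarrow> d0 \<ge> 0 \<Longrightarrow>
   isCont (\<lambda>z. ee i (fst z) (snd z)) (x0, d0) \<and> isCont (\<lambda>z. ee' i (fst z) (snd z)) (x0, d0)"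
proof (induction i)
  case 0 then show ?case by simp
next
  case (Suc i)
  have dp: "den (Suc i) x0 d0 \<noteq> 0" using den_pos[of "Suc i" x0 d0] Suc by force
  have IH: "isCont (\<lambda>z. ee i (fst z) (snd z)) (x0, d0)" "isCont (\<lambda>z. ee' i (fst z) (snd z)) (x0, d0)"
    using Suc by auto
  show ?case
    unfolding ee.simps ee'.simps using dp unfolding den_def
    by (auto intro!: continuous_intros IH)
qed

lemma ee_zero: "ee (Suc i) x 0 = 0" "ee' i x 0 = 0"
  by (induction i) auto

lemma sum_ee0: "(\<Sum>i<n. f i * ee i x 0) = f 0"
proof -
  obtain m where m: "n = Suc m" using n by (cases n) auto
  show ?thesis unfolding m sum.lessThan_Suc_shift by (simp add: ee_zero)
qed

lemma sum_ee0': "(\<Sum>i<n. ee i x 0) = 1"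
  using sum_ee0[of "\<lambda>_. 1" x] by simp

lemma sum_ee'0: "(\<Sum>i<n. f i * ee' i x 0) = 0"
  by (simp add: ee_zero)

lemma G_zero: "G x 0 = \<beta> n * \<beta> 0 * (dn x * (1 - x) - \<mu>) + \<beta> 0 * dn x * (\<beta> n * (1 - x) - dn x)
     - (r + \<mu>) * \<beta> n * dn x + (\<beta> n * \<mu> - (r + \<mu>) * dn x) * \<beta> n"
  using sum_ee0[of \<beta> x] sum_ee0'[of x] sum_ee'0[of "\<lambda>_. 1" x] sum_ee'0[of \<beta> x]
  by (simp add: G_def Bh_def Bh'_def Eh_def Eh'_def ee_zero)

lemma H_zero: "H x 0 = \<beta> 0 * dn x * (dn x * (1 - x) - \<mu>) + (\<beta> n * \<mu> - (r + \<mu>) * dn x) * dn x"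
  using sum_ee0[of \<beta> x] sum_ee0'[of x]
  by (simp add: H_def Bh_def Eh_def)

lemma G_cont: "x0 \<ge> 0 \<Longrightarrow> isCont (\<lambda>z. G (fst z) (snd z)) (x0, 0)"
proof -
  assume x0: "x0 \<ge> 0"
  have C: "isCont (\<lambda>z. ee i (fst z) (snd z)) (x0, 0)" "isCont (\<lambda>z. ee' i (fst z) (snd z)) (x0, 0)"
    if "i \<in> {..<n}" for i using ee_cont[of i x0 0] that x0 by auto
  have C1: "isCont (\<lambda>z. ee (n-1) (fst z) (snd z)) (x0, 0)" "isCont (\<lambda>z. ee' (n-1) (fst z) (snd z)) (x0, 0)"
    using C[of "n-1"] n by auto
  show ?thesis
    unfolding G_def Bh_def Bh'_def Eh_def Eh'_def dn_def
    using n by (intro C C1 continuous_intros) auto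
qed

lemma ee_diff: "i < n \<Longrightarrow> x \<ge> 0 \<Longrightarrow> (\<lambda>d. ee i x d) differentiable (at 0)"
proof (induction i)
  case 0 then show ?case by simp
next
  case (Suc i)
  have dp: "den (Suc i) x 0 \<noteq> 0" using den_pos[of "Suc i" x 0] Suc by force
  have IH: "(\<lambda>d. ee i x d) differentiable (at 0)" using Suc by auto
  show ?case
    unfolding ee.simps using dp unfolding den_def
    by (intro derivative_intros IH) auto
qed

lemma H_diff: "x \<ge> 0 \<Longrightarrow> (\<lambda>d. H x d) differentiable (at 0)"
proof -
  assume x: "x \<ge> 0"
  have C: "(\<lambda>d. ee i x d) differentiable (at 0)" if "i < n" for i using ee_diff[OF that x] .
  have C1: "(\<lambda>d. ee (n-1) x d) differentiable (at 0)" using C[of "n-1"] n by auto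
  show ?thesis
    unfolding H_def Bh_def Eh_def using n
    by (intro derivative_intros C C1; auto intro: C)
qed


lemma sum_split0: "(\<Sum>i\<le>n. f i) = f 0 + (\<Sum>i\<in>{1..n}. (f i :: real))"
  by (simp add: atMost_atLeast0 sum.atLeast_Suc_atMost)

lemma sum_split_n: "(\<Sum>i\<le>n. f i) = (\<Sum>i<n. f i) + (f n :: real)"
  by (simp add: lessThan_Suc_atMost[symmetric])

lemma redundancy:
  fixes S :: "nat \<Rightarrow> real" and I d :: real
  assumes norm: "(\<Sum>i\<le>n. S i) + I = 1"
    and mid: "\<forall>i\<in>{1..n-1}. - (p i * \<omega>) * S i + (1 - p (i-1)) * d * S (i-1)
          - (1 - p i) * d * S i - \<beta> i * I * S i - \<mu> * S i = 0"
    and last: "\<mu> - p n * \<omega> * S n + (1 - p (n-1)) * d * S (n-1) - \<beta> n * I * S n - \<mu> * S n = 0"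
    and Ieq: "I * (\<Sum>i\<le>n. \<beta> i * S i) - r * I - \<mu> * I = 0"
  shows "(\<Sum>i\<in>{1..n}. p i * \<omega> * S i) - d * S 0 + r * I - \<beta> 0 * I * S 0 - \<mu> * S 0 = 0"
proof -
  define T where "T i = (1 - p i) * d * S i" for i
  have A: "p i * \<omega> * S i = (T (i-1) - T i - \<beta> i * I * S i - \<mu> * S i) + (if i = n then T n + \<mu> else 0)"
    if "i \<in> {1..n}" for i
  proof (cases "i = n")
    case True then show ?thesis using last by (simp add: T_def algebra_simps)
  next
    case False
    then have "i \<in> {1..n-1}" using that by auto
    then show ?thesis using mid False by (auto simp: T_def algebra_simps)
  qed
  have "(\<Sum>i\<in>{1..n}. p i * \<omega> * S i) =
     (\<Sum>i\<in>{1..n}. (T (i-1) - T i - \<beta> i * I * S i - \<mu> * S i) + (if i = n then T n + \<mu> else 0))"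
    by (rule sum.cong) (auto simp: A)
  also have "\<dots> = (\<Sum>i\<in>{1..n}. T (i-1) - T i) - I * (\<Sum>i\<in>{1..n}. \<beta> i * S i)
      - \<mu> * (\<Sum>i\<in>{1..n}. S i) + (T n + \<mu>)"
    using n by (simp add: sum.distrib sum_subtractf sum_distrib_left algebra_simps)
  also have "(\<Sum>i\<in>{1..n}. T (i-1) - T i) = T 0 - T n"
    using sum_telescope''[of 0 n T] by (simp add: sum_negf[symmetric] sum_subtractf)
  finally have X: "(\<Sum>i\<in>{1..n}. p i * \<omega> * S i) = T 0 - T n - I * (\<Sum>i\<in>{1..n}. \<beta> i * S i)
      - \<mu> * (\<Sum>i\<in>{1..n}. S i) + (T n + \<mu>)" .
  have s1: "(\<Sum>i\<in>{1..n}. S i) = 1 - I - S 0" using norm sum_split0[of S] by simp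
  have s2: "I * (\<Sum>i\<in>{1..n}. \<beta> i * S i) = r * I + \<mu> * I - I * \<beta> 0 * S 0"
    using Ieq sum_split0[of "\<lambda>i. \<beta> i * S i"] by (simp add: algebra_simps)
  show ?thesis unfolding X s1 s2 using p0 by (simp add: T_def algebra_simps)
qed

lemma eq_to_H:
  assumes eq: "endemic_equilibrium n d \<omega> r \<mu> p \<beta> S I" and I: "I \<ge> 0" and d: "d \<ge> 0"
  shows "H I d = 0 \<and> (\<forall>i\<le>n. S i = Sf I d i)"
proof -
  note E = eq[unfolded endemic_equilibrium_def]
  have SE: "S i = ee i I d * S 0" if "i < n" for i
    using that
  proof (induction i)
    case 0 then show ?case by simp
  next
    case (Suc i)
    have mem: "Suc i \<in> {1..n-1}" using Suc by auto
    have eqi: "- (p (Suc i) * \<omega>) * S (Suc i) + (1 - p i) * d * S i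
          - (1 - p (Suc i)) * d * S (Suc i) - \<beta> (Suc i) * I * S (Suc i) - \<mu> * S (Suc i) = 0"
      using E mem by fastforce
    have dp: "den (Suc i) I d > 0" using den_pos[of "Suc i" I d] Suc I d by auto
    have "S (Suc i) * den (Suc i) I d = (1 - p i) * d * S i"
      using eqi by (simp add: den_def algebra_simps)
    then have "S (Suc i) = (1 - p i) * d * S i / den (Suc i) I d" using dp by (simp add: field_simps)
    then show ?case using Suc by simp
  qed
  have dnp: "dn I > 0" using dn_pos I by auto
  have Sn: "S n * dn I = \<mu> + (1 - p (n-1)) * d * S (n-1)"
    using E by (simp add: dn_def algebra_simps)
  have Sn1: "S (n-1) = ee (n-1) I d * S 0" using SE[of "n-1"] n by simp
  have sumS: "(\<Sum>i<n. S i) = S 0 * (\<Sum>i<n. ee i I d)"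
  proof -
    have "(\<Sum>i<n. S i) = (\<Sum>i<n. S 0 * ee i I d)" by (intro sum.cong refl) (metis SE lessThan_iff mult.commute)
    also have "\<dots> = S 0 * (\<Sum>i<n. ee i I d)" by (rule sum_distrib_left[symmetric])
    finally show ?thesis .
  qed
  have sumbS: "(\<Sum>i<n. \<beta> i * S i) = S 0 * (\<Sum>i<n. \<beta> i * ee i I d)"
  proof -
    have "(\<Sum>i<n. \<beta> i * S i) = (\<Sum>i<n. S 0 * (\<beta> i * ee i I d))" by (intro sum.cong refl) (metis SE lessThan_iff mult.commute mult.left_commute)
    also have "\<dots> = S 0 * (\<Sum>i<n. \<beta> i * ee i I d)" by (rule sum_distrib_left[symmetric])
    finally show ?thesis .
  qed
  have N: "(\<Sum>i<n. S i) + S n + I = 1" using E sum_split_n[of S] by simp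
  have I0: "I \<noteq> 0" using E by simp
  have Ieq: "(\<Sum>i\<le>n. \<beta> i * S i) = r + \<mu>"
  proof -
    have "I * ((\<Sum>i\<le>n. \<beta> i * S i) - (r + \<mu>)) = 0" using E by (simp add: algebra_simps)
    then show ?thesis using I0 by simp
  qed
  then have Ieq2: "(\<Sum>i<n. \<beta> i * S i) + \<beta> n * S n = r + \<mu>" using sum_split_n[of "\<lambda>i. \<beta> i * S i"] by simp
  have A: "S 0 * Eh I d = dn I * (1 - I) - \<mu>"
  proof -
    have "dn I * ((\<Sum>i<n. S i) + S n + I) = dn I" using N by simp
    then show ?thesis unfolding Eh_def using Sn Sn1 sumS by (simp add: algebra_simps)
  qed
  have B: "S 0 * Bh I d = (r + \<mu>) * dn I - \<beta> n * \<mu>"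
  proof -
    have "dn I * ((\<Sum>i<n. \<beta> i * S i) + \<beta> n * S n) = (r + \<mu>) * dn I" using Ieq2 by simp
    then have "dn I * (\<Sum>i<n. \<beta> i * S i) + \<beta> n * (S n * dn I) = (r + \<mu>) * dn I"
      by (simp add: algebra_simps)
    then show ?thesis unfolding Bh_def Sn Sn1 sumbS by (simp add: algebra_simps)
  qed
  have "H I d = Bh I d * (S 0 * Eh I d) + (\<beta> n * \<mu> - (r + \<mu>) * dn I) * Eh I d"
    unfolding H_def A ..
  also have "\<dots> = Eh I d * (S 0 * Bh I d + (\<beta> n * \<mu> - (r + \<mu>) * dn I))" by (simp add: algebra_simps)
  also have "\<dots> = 0" unfolding B by simp
  finally have H0: "H I d = 0" .
  have Ep: "Eh I d > 0" using Eh_pos I d by auto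
  have S0: "S 0 = s0 I d" using A Ep by (simp add: s0_def field_simps)
  have "S i = Sf I d i" if "i \<le> n" for i
  proof (cases "i < n")
    case True then show ?thesis using SE S0 by (simp add: Sf_def)
  next
    case False
    then have "i = n" using that by simp
    then show ?thesis using Sn Sn1 S0 dnp by (simp add: Sf_def field_simps)
  qed
  then show ?thesis using H0 by simp
qed

lemma H_to_eq:
  assumes H0: "H I d = 0" and I: "I > 0" and d: "d \<ge> 0"
  shows "endemic_equilibrium n d \<omega> r \<mu> p \<beta> (Sf I d) I"
proof -
  define S where "S = Sf I d"
  define s where "s = s0 I d"
  have Ep: "Eh I d > 0" using Eh_pos I d by auto
  have dnp: "dn I > 0" using dn_pos I by auto
  have sE: "s * Eh I d = dn I * (1 - I) - \<mu>" using Ep by (simp add: s_def s0_def)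
  have SE: "S i = ee i I d * s" if "i < n" for i using that by (simp add: S_def Sf_def s_def)
  have Sn: "S n * dn I = \<mu> + (1 - p (n-1)) * d * S (n-1)"
    using dnp n by (simp add: S_def Sf_def s_def)
  have Sn1: "S (n-1) = ee (n-1) I d * s" using SE[of "n-1"] n by simp
  have sumS: "(\<Sum>i<n. S i) = s * (\<Sum>i<n. ee i I d)"
    by (simp add: SE sum_distrib_left mult.commute)
  have sumbS: "(\<Sum>i<n. \<beta> i * S i) = s * (\<Sum>i<n. \<beta> i * ee i I d)"
    by (simp add: SE sum_distrib_left algebra_simps)
  have N: "(\<Sum>i\<le>n. S i) + I = 1"
  proof -
    have "dn I * ((\<Sum>i<n. S i) + S n + I) = dn I * (\<Sum>i<n. S i) + S n * dn I + I * dn I"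
      by (simp add: algebra_simps)
    also have "\<dots> = s * Eh I d + \<mu> + I * dn I" unfolding Sn Sn1 sumS Eh_def by (simp add: algebra_simps)
    also have "\<dots> = dn I" unfolding sE by (simp add: algebra_simps)
    finally have "dn I * ((\<Sum>i<n. S i) + S n + I) = dn I" .
    then have "(\<Sum>i<n. S i) + S n + I = 1" using dnp by simp
    then show ?thesis using sum_split_n[of S] by simp
  qed
  have sB: "s * Bh I d = (r + \<mu>) * dn I - \<beta> n * \<mu>"
  proof -
    have h1: "Bh I d * (s * Eh I d) + (\<beta> n * \<mu> - (r + \<mu>) * dn I) * Eh I d = 0"
      using H0 unfolding H_def sE .
    have h2: "Eh I d * (s * Bh I d - ((r + \<mu>) * dn I - \<beta> n * \<mu>)) =
        Bh I d * (s * Eh I d) + (\<beta> n * \<mu> - (r + \<mu>) * dn I) * Eh I d"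
      by (simp add: algebra_simps)
    have "Eh I d * (s * Bh I d - ((r + \<mu>) * dn I - \<beta> n * \<mu>)) = 0" using h1 h2 by simp
    then show ?thesis using Ep by simp
  qed
  have Ieq: "(\<Sum>i\<le>n. \<beta> i * S i) = r + \<mu>"
  proof -
    have "dn I * ((\<Sum>i<n. \<beta> i * S i) + \<beta> n * S n) = (r + \<mu>) * dn I"
    proof -
      have "dn I * ((\<Sum>i<n. \<beta> i * S i) + \<beta> n * S n) = dn I * (\<Sum>i<n. \<beta> i * S i) + \<beta> n * (S n * dn I)"
        by (simp add: algebra_simps)
      also have "\<dots> = s * Bh I d + \<beta> n * \<mu>" unfolding Sn Sn1 sumbS Bh_def by (simp add: algebra_simps)
      finally show ?thesis using sB by simp
    qed
    then have "dn I * ((\<Sum>i<n. \<beta> i * S i) + \<beta> n * S n) = dn I * (r + \<mu>)" by (simp add: mult.commute)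
    then have "(\<Sum>i<n. \<beta> i * S i) + \<beta> n * S n = r + \<mu>" using dnp by simp
    then show ?thesis using sum_split_n[of "\<lambda>i. \<beta> i * S i"] by simp
  qed
  have Ieq': "I * (\<Sum>i\<le>n. \<beta> i * S i) - r * I - \<mu> * I = 0" using Ieq by (simp add: algebra_simps)
  have mid: "\<forall>i\<in>{1..n-1}. - (p i * \<omega>) * S i + (1 - p (i-1)) * d * S (i-1)
          - (1 - p i) * d * S i - \<beta> i * I * S i - \<mu> * S i = 0"
  proof
    fix i assume i: "i \<in> {1..n-1}"
    then obtain j where j: "i = Suc j" by (cases i) auto
    have jn: "Suc j < n" "j < n" using i j by auto
    have dp: "den (Suc j) I d > 0" using den_pos[of "Suc j" I d] jn I d by auto
    have "S (Suc j) * den (Suc j) I d = (1 - p j) * d * S j"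
      using SE[OF jn(1)] SE[OF jn(2)] dp by simp
    then show "- (p i * \<omega>) * S i + (1 - p (i-1)) * d * S (i-1)
          - (1 - p i) * d * S i - \<beta> i * I * S i - \<mu> * S i = 0"
      unfolding j by (simp add: den_def algebra_simps)
  qed
  have last: "\<mu> - p n * \<omega> * S n + (1 - p (n-1)) * d * S (n-1) - \<beta> n * I * S n - \<mu> * S n = 0"
    using Sn by (simp add: dn_def algebra_simps)
  have first: "(\<Sum>i\<in>{1..n}. p i * \<omega> * S i) - d * S 0 + r * I - \<beta> 0 * I * S 0 - \<mu> * S 0 = 0"
    by (rule redundancy[OF N mid last Ieq'])
  show ?thesis unfolding endemic_equilibrium_def S_def[symmetric]
    using N I mid last Ieq' first by simp
qed

end
end



lemma local_unique_zero:
  fixes F G :: "real \<Rightarrow> real \<Rightarrow> real" and y K \<eta> C :: real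
  assumes eta: "\<eta> > 0"
    and der: "\<And>x d. \<bar>x - y\<bar> < \<eta> \<Longrightarrow> 0 \<le> d \<Longrightarrow> d < \<eta> \<Longrightarrow> ((\<lambda>x. F x d) has_real_derivative G x d) (at x)"
    and cont: "isCont (\<lambda>z. G (fst z) (snd z)) (y, 0)"
    and G0: "G y 0 \<noteq> 0"
    and bnd: "\<And>d. 0 \<le> d \<Longrightarrow> d < \<eta> \<Longrightarrow> \<bar>F y d\<bar> \<le> K * d"
    and C: "C > 0"
  shows "\<exists>\<delta>1>0. \<forall>d. 0 < d \<and> d < \<delta>1 \<longrightarrow> (\<exists>x. \<bar>x - y\<bar> \<le> C * sqrt d \<and> F x d = 0 \<and>
           (\<forall>x'. \<bar>x' - y\<bar> \<le> C * sqrt d \<and> F x' d = 0 \<longrightarrow> x' = x))"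
proof (cases "G y 0 > 0")
  case True then show ?thesis using local_unique_zero_pos[OF eta der cont _ bnd C] by blast
next
  case False
  then have G': "(\<lambda>x d. - G x d) y 0 > 0" using G0 by simp
  have der': "((\<lambda>x. - F x d) has_real_derivative - G x d) (at x)"
    if "\<bar>x - y\<bar> < \<eta>" "0 \<le> d" "d < \<eta>" for x d
    using der[OF that] by (auto intro!: derivative_eq_intros)
  have cont': "isCont (\<lambda>z. - G (fst z) (snd z)) (y, 0)" using cont by (intro continuous_intros)
  have bnd': "\<bar>- F y d\<bar> \<le> K * d" if "0 \<le> d" "d < \<eta>" for d using bnd[OF that] by simp
  from local_unique_zero_pos[of \<eta> y "\<lambda>x d. - F x d" "\<lambda>x d. - G x d", OF eta der' cont' G' bnd' C]
  show ?thesis by simp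
qed

lemma lip0:
  fixes f :: "real \<Rightarrow> real"
  assumes "f differentiable (at 0)"
  shows "\<exists>K s. s > 0 \<and> (\<forall>d. 0 \<le> d \<and> d < s \<longrightarrow> \<bar>f d - f 0\<bar> \<le> K * d)"
proof -
  from assms obtain D where "DERIV f 0 :> D"
    using DERIV_deriv_iff_real_differentiable by blast
  from LIM_D[OF DERIV_D[OF this], of 1] obtain s where s: "s > 0"
    and H: "\<forall>h. h \<noteq> 0 \<and> norm (h - 0) < s \<longrightarrow> norm ((f (0 + h) - f 0) / h - D) < 1" by auto
  show ?thesis
  proof (rule exI[of _ "\<bar>D\<bar> + 1"], rule exI[of _ s], intro conjI allI impI)
    show "s > 0" by fact
    fix d :: real assume d: "0 \<le> d \<and> d < s"
    show "\<bar>f d - f 0\<bar> \<le> (\<bar>D\<bar> + 1) * d"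
    proof (cases "d = 0")
      case True then show ?thesis by simp
    next
      case False
      then have dp: "d > 0" using d by simp
      have "\<bar>(f d - f 0) / d - D\<bar> < 1" using H d False by auto
      then have "\<bar>(f d - f 0) / d\<bar> \<le> \<bar>D\<bar> + 1" by linarith
      then have "\<bar>f d - f 0\<bar> / d \<le> \<bar>D\<bar> + 1" using dp by simp
      then show ?thesis using dp by (simp add: field_simps)
    qed
  qed
qed



lemma rf_mul: "(a::real) \<noteq> 0 \<Longrightarrow> b \<noteq> 0 \<Longrightarrow>
  (1 + r / a - c / b - w * e / (a * b)) * (a * b) = a * b + r * b - c * a - w * e"
  by (simp add: field_simps)

theorem lemma2:
  fixes n :: nat and \<omega> r \<mu> C y1 y2 :: real and p \<beta> :: "nat \<Rightarrow> real"
  assumes n: "n \<ge> 1"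
    and \<omega>: "\<omega> \<ge> 0" and r: "r > 0" and \<mu>: "\<mu> > 0"
    and p0: "p 0 = 0" and p: "\<forall>i\<in>{1..n}. 0 \<le> p i \<and> p i \<le> 1"
    and \<beta>pos: "\<beta> 0 > 0"
    and \<beta>mono: "\<forall>i j. i \<le> j \<and> j \<le> n \<longrightarrow> \<beta> i \<le> \<beta> j"
    and \<beta>lt: "\<beta> 0 < \<beta> n"
    and roots: "y1 \<le> y2"
      "{x. \<beta> 0 * x + \<mu> \<noteq> 0 \<and> \<beta> n * x + \<mu> + p n * \<omega> \<noteq> 0 \<and>
           root_fun r \<mu> (\<beta> 0) (\<beta> n) (p n * \<omega>) x = 0} = {y1, y2}"
    and C: "C > 0"
    and Cprop: "\<exists>\<delta>0>0. \<forall>\<delta> S I. 0 \<le> \<delta> \<and> \<delta> < \<delta>0 \<and>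
                  endemic_equilibrium n \<delta> \<omega> r \<mu> p \<beta> S I \<and> I \<in> {0..1} \<longrightarrow>
                  I \<in> {y1 - C * sqrt \<delta> .. y1 + C * sqrt \<delta>} \<union>
                       {y2 - C * sqrt \<delta> .. y2 + C * sqrt \<delta>}"
  shows "\<forall>y\<in>{y1, y2}. \<exists>\<delta>1>0. \<forall>\<delta>. 0 < \<delta> \<and> \<delta> < \<delta>1 \<and>
            {y - C * sqrt \<delta> .. y + C * sqrt \<delta>} \<subseteq> {0<..1} \<and>
            \<bar>y1 - y2\<bar> \<ge> \<delta> powr (1/3) \<longrightarrow>
            (\<exists>S I. endemic_equilibrium n \<delta> \<omega> r \<mu> p \<beta> S I \<and>
                   I \<in> {y - C * sqrt \<delta> .. y + C * sqrt \<delta>} \<and>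
                   (\<forall>S' I'. endemic_equilibrium n \<delta> \<omega> r \<mu> p \<beta> S' I' \<and>
                      I' \<in> {y - C * sqrt \<delta> .. y + C * sqrt \<delta>} \<longrightarrow>
                      I' = I \<and> (\<forall>i\<le>n. S' i = S i)))"
proof (intro ballI)
  fix y assume yin: "y \<in> {y1, y2}"
  note ctx = n \<omega> \<mu> p0 p \<beta>pos \<beta>mono
  show "\<exists>\<delta>1>0. \<forall>\<delta>. 0 < \<delta> \<and> \<delta> < \<delta>1 \<and>
            {y - C * sqrt \<delta> .. y + C * sqrt \<delta>} \<subseteq> {0<..1} \<and>
            \<bar>y1 - y2\<bar> \<ge> \<delta> powr (1/3) \<longrightarrow>
            (\<exists>S I. endemic_equilibrium n \<delta> \<omega> r \<mu> p \<beta> S I \<and>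
                   I \<in> {y - C * sqrt \<delta> .. y + C * sqrt \<delta>} \<and>
                   (\<forall>S' I'. endemic_equilibrium n \<delta> \<omega> r \<mu> p \<beta> S' I' \<and>
                      I' \<in> {y - C * sqrt \<delta> .. y + C * sqrt \<delta>} \<longrightarrow>
                      I' = I \<and> (\<forall>i\<le>n. S' i = S i)))"
  proof (cases "y1 \<noteq> y2 \<and> 0 < y \<and> y < 1")
    case False
    show ?thesis
    proof (rule exI[of _ 1], intro conjI allI impI)
      show "(0::real) < 1" by simp
      fix \<delta> :: real
      assume a: "0 < \<delta> \<and> \<delta> < 1 \<and> {y - C * sqrt \<delta> .. y + C * sqrt \<delta>} \<subseteq> {0<..1} \<and>
            \<bar>y1 - y2\<bar> \<ge> \<delta> powr (1/3)"
      have cs: "C * sqrt \<delta> > 0" using C a by simp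
      have "y - C * sqrt \<delta> \<in> {y - C * sqrt \<delta> .. y + C * sqrt \<delta>}"
        "y + C * sqrt \<delta> \<in> {y - C * sqrt \<delta> .. y + C * sqrt \<delta>}" using cs by auto
      then have "y - C * sqrt \<delta> \<in> {0<..1}" "y + C * sqrt \<delta> \<in> {0<..1}" using a by blast+
      moreover have "\<delta> powr (1/3) > 0" using a by simp
      ultimately have False using False a cs by auto
      then show "\<exists>S I. endemic_equilibrium n \<delta> \<omega> r \<mu> p \<beta> S I \<and>
                   I \<in> {y - C * sqrt \<delta> .. y + C * sqrt \<delta>} \<and>
                   (\<forall>S' I'. endemic_equilibrium n \<delta> \<omega> r \<mu> p \<beta> S' I' \<and>
                      I' \<in> {y - C * sqrt \<delta> .. y + C * sqrt \<delta>} \<longrightarrow>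
                      I' = I \<and> (\<forall>i\<le>n. S' i = S i))" ..
    qed
  next
    case True
    then have y12: "y1 \<noteq> y2" and y0: "0 < y" and y1': "y < 1" by auto
    obtain v where v: "v \<in> {y1, y2}" "v \<noteq> y" using yin y12 by auto
    define Pf where "Pf x = \<beta> 0 * ((p n * \<omega> + \<beta> n * x + \<mu>) * (1 - x) - \<mu>) + \<beta> n * \<mu>
        - (r + \<mu>) * (p n * \<omega> + \<beta> n * x + \<mu>)" for x
    have root: "Pf u = 0" if "u \<in> {y1, y2}" for u
    proof -
      have "u \<in> {x. \<beta> 0 * x + \<mu> \<noteq> 0 \<and> \<beta> n * x + \<mu> + p n * \<omega> \<noteq> 0 \<and>
           root_fun r \<mu> (\<beta> 0) (\<beta> n) (p n * \<omega>) x = 0}" using roots(2) that by simp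
      then have a: "\<beta> 0 * u + \<mu> \<noteq> 0" "\<beta> n * u + \<mu> + p n * \<omega> \<noteq> 0"
        "root_fun r \<mu> (\<beta> 0) (\<beta> n) (p n * \<omega>) u = 0" by auto
      have m: "root_fun r \<mu> (\<beta> 0) (\<beta> n) (p n * \<omega>) u * ((\<beta> 0 * u + \<mu>) * (\<beta> n * u + \<mu> + p n * \<omega>))
         = (\<beta> 0 * u + \<mu>) * (\<beta> n * u + \<mu> + p n * \<omega>) + r * (\<beta> n * u + \<mu> + p n * \<omega>)
          - \<beta> n * (\<beta> 0 * u + \<mu>) - p n * \<omega> * \<beta> 0"
        using rf_mul[OF a(1,2), of r "\<beta> n" "p n * \<omega>" "\<beta> 0"] unfolding root_fun_def by simp
      have eq: "(\<beta> 0 * u + \<mu>) * (\<beta> n * u + \<mu> + p n * \<omega>) + r * (\<beta> n * u + \<mu> + p n * \<omega>)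
          - \<beta> n * (\<beta> 0 * u + \<mu>) - p n * \<omega> * \<beta> 0 = 0"
        using m a(3) by simp
      have "Pf u = - ((\<beta> 0 * u + \<mu>) * (\<beta> n * u + \<mu> + p n * \<omega>) + r * (\<beta> n * u + \<mu> + p n * \<omega>)
          - \<beta> n * (\<beta> 0 * u + \<mu>) - p n * \<omega> * \<beta> 0)"
        unfolding Pf_def by (simp add: algebra_simps)
      then show ?thesis using eq by simp
    qed
    define dy where "dy = p n * \<omega> + \<beta> n * y + \<mu>"
    define P' where "P' = \<beta> 0 * (\<beta> n * (1 - y) - dy) - (r + \<mu>) * \<beta> n"
    have dyp: "dy > 0" using dn_pos[OF ctx, of y] y0 by (simp add: dn_def dy_def)
    have GZ: "G n \<omega> r \<mu> p \<beta> y 0 = \<beta> n * Pf y + dy * P'"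
      unfolding G_zero[OF ctx] by (simp add: dn_def dy_def Pf_def P'_def algebra_simps)
    have ident: "P' * (y - v) = Pf y - Pf v - \<beta> 0 * \<beta> n * (y - v)^2"
      by (simp add: Pf_def P'_def dy_def algebra_simps power2_eq_square)
    have "\<beta> 0 * \<beta> n * (y - v)^2 \<noteq> 0" using v \<beta>pos \<beta>lt by simp
    then have "P' \<noteq> 0" using ident root[OF yin] root[OF v(1)] by auto
    then have G0: "G n \<omega> r \<mu> p \<beta> y 0 \<noteq> 0" using GZ root[OF yin] dyp by simp
    have HZ: "H n \<omega> r \<mu> p \<beta> y 0 = 0"
    proof -
      have "H n \<omega> r \<mu> p \<beta> y 0 = dy * Pf y"
        unfolding H_zero[OF ctx] by (simp add: dn_def dy_def Pf_def algebra_simps)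
      then show ?thesis using root[OF yin] by simp
    qed
    obtain K s where s: "s > 0" and Ks: "\<And>d. 0 \<le> d \<Longrightarrow> d < s \<Longrightarrow>
        \<bar>H n \<omega> r \<mu> p \<beta> y d - H n \<omega> r \<mu> p \<beta> y 0\<bar> \<le> K * d"
    proof -
      have hd: "(\<lambda>d. H n \<omega> r \<mu> p \<beta> y d) differentiable (at 0)"
        by (rule H_diff[OF ctx]) (use y0 in simp)
      show ?thesis using lip0[OF hd] that by blast
    qed
    define \<eta> where "\<eta> = min y s"
    have \<eta>: "\<eta> > 0" using s y0 by (simp add: \<eta>_def)
    have der: "((\<lambda>x. H n \<omega> r \<mu> p \<beta> x d) has_real_derivative G n \<omega> r \<mu> p \<beta> x d) (at x)"
      if "\<bar>x - y\<bar> < \<eta>" "0 \<le> d" "d < \<eta>" for x d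
      using H_deriv[OF ctx, of x d] that by (auto simp: \<eta>_def)
    have bnd: "\<bar>H n \<omega> r \<mu> p \<beta> y d\<bar> \<le> K * d" if "0 \<le> d" "d < \<eta>" for d
      using Ks[of d] that HZ by (auto simp: \<eta>_def)
    obtain \<delta>1 where \<delta>1: "\<delta>1 > 0" and D1: "\<And>d. 0 < d \<Longrightarrow> d < \<delta>1 \<Longrightarrow>
        (\<exists>x. \<bar>x - y\<bar> \<le> C * sqrt d \<and> H n \<omega> r \<mu> p \<beta> x d = 0 \<and>
           (\<forall>x'. \<bar>x' - y\<bar> \<le> C * sqrt d \<and> H n \<omega> r \<mu> p \<beta> x' d = 0 \<longrightarrow> x' = x))"
      using local_unique_zero[OF \<eta> der G_cont[OF ctx, of y] G0 bnd C] y0 by auto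
    show ?thesis
    proof (rule exI[of _ \<delta>1], intro conjI allI impI)
      show "\<delta>1 > 0" by fact
      fix \<delta> :: real
      assume a: "0 < \<delta> \<and> \<delta> < \<delta>1 \<and> {y - C * sqrt \<delta> .. y + C * sqrt \<delta>} \<subseteq> {0<..1} \<and>
            \<bar>y1 - y2\<bar> \<ge> \<delta> powr (1/3)"
      then obtain x where x: "\<bar>x - y\<bar> \<le> C * sqrt \<delta>" "H n \<omega> r \<mu> p \<beta> x \<delta> = 0"
        and U: "\<And>x'. \<bar>x' - y\<bar> \<le> C * sqrt \<delta> \<Longrightarrow> H n \<omega> r \<mu> p \<beta> x' \<delta> = 0 \<Longrightarrow> x' = x"
        using D1[of \<delta>] by auto
      have xJ: "x \<in> {y - C * sqrt \<delta> .. y + C * sqrt \<delta>}" using x(1) by (auto simp: abs_le_iff)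
      then have "x \<in> {0<..1}" using a by blast
      then have xp: "x > 0" by simp
      show "\<exists>S I. endemic_equilibrium n \<delta> \<omega> r \<mu> p \<beta> S I \<and>
                   I \<in> {y - C * sqrt \<delta> .. y + C * sqrt \<delta>} \<and>
                   (\<forall>S' I'. endemic_equilibrium n \<delta> \<omega> r \<mu> p \<beta> S' I' \<and>
                      I' \<in> {y - C * sqrt \<delta> .. y + C * sqrt \<delta>} \<longrightarrow>
                      I' = I \<and> (\<forall>i\<le>n. S' i = S i))"
      proof (intro exI[of _ "Sf n \<omega> \<mu> p \<beta> x \<delta>"] exI[of _ x] conjI allI impI)
        show "endemic_equilibrium n \<delta> \<omega> r \<mu> p \<beta> (Sf n \<omega> \<mu> p \<beta> x \<delta>) x"
          using H_to_eq[OF ctx x(2) xp] a by auto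
        show "x \<in> {y - C * sqrt \<delta> .. y + C * sqrt \<delta>}" by fact
        fix S' I'
        assume b: "endemic_equilibrium n \<delta> \<omega> r \<mu> p \<beta> S' I' \<and> I' \<in> {y - C * sqrt \<delta> .. y + C * sqrt \<delta>}"
        then have "I' \<in> {0<..1}" using a by blast
        then have I'p: "I' > 0" by simp
        have E: "H n \<omega> r \<mu> p \<beta> I' \<delta> = 0 \<and> (\<forall>i\<le>n. S' i = Sf n \<omega> \<mu> p \<beta> I' \<delta> i)"
          using eq_to_H[OF ctx, of \<delta> r S' I'] b I'p a by auto
        have "\<bar>I' - y\<bar> \<le> C * sqrt \<delta>" using b by (auto simp: abs_le_iff)
        then show I'x: "I' = x" using U E by auto
        fix i assume "i \<le> n"
        then show "S' i = Sf n \<omega> \<mu> p \<beta> x \<delta> i" using E I'x by simp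
      qed
    qed
  qed
qed


end
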